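(* Work in the semifield $\mathbb{R}_{\max,+}$. Let $\bm{r}_1,\ldots,\bm{r}_m\in\mathbb{R}^{n}$ and $w_1,\ldots,w_m\in\mathbb{R}$, let $\bm{p}=w_1\bm{r}_1\oplus\cdots\oplus w_m\bm{r}_m$ and $\bm{q}^{-}=w_1\bm{r}_1^{-}\oplus\cdots\oplus w_m\bm{r}_m^{-}$, and let $\varphi(\bm{x})=\bm{x}^{-}\bm{p}\oplus\bm{q}^{-}\bm{x}$ (which equals $\max_{i}(\rho(\bm{r}_i,\bm{x})+w_i)$ with $\rho$ the Chebyshev distance). Let $A=(a_{ij})\in\mathbb{R}_{\max,+}^{n\times n}$ be an irreducible matrix with $\mathrm{Tr}(A)=\mathbb{1}$, let $S_0=\{\bm{x}\in\mathbb{R}^n\mid A\bm{x}=\bm{x}\}$ (i.e. $\max_{j}(a_{ij}+x_j)=x_i$ for all $i$), and put $$\Delta=\sqrt{(A^{+}(\bm{q}^{-}A^{+})^{-})^{-}\bm{p}}.$$ Then $\min_{\bm{x}\in S_0}\varphi(\bm{x})=\Delta$, and the minimum is attained at $\bm{x}=\Delta A^{+}(\bm{q}^{-}A^{+})^{-}$.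
   Context: $\mathbb{R}_{\max,+}=(\mathbb{R}\cup\{-\infty\},-\infty,0,\max,+)$: $x\oplus y=\max(x,y)$, $x\otimes y=x+y$ (sign omitted), zero $\mathbb{0}=-\infty$, identity $\mathbb{1}=0$, $x^{-1}=-x$, $\sqrt{x}=x/2$. Matrix and vector operations are the usual ones with $\max$ in place of sum and $+$ in place of product. For a nonzero column (or row) vector $\bm{x}=(x_j)$, the pseudo-inverse $\bm{x}^{-}$ is the row (resp. column) vector with entries $-x_j$ if $x_j\ne-\infty$ and $-\infty$ otherwise; $\bm{q}$ is the column vector with $\bm{q}^{-}$ as its pseudo-inverse. $I$ is the identity matrix (0 on diagonal, $-\infty$ elsewhere), $A^0=I$, $A^{k}=A^{k-1}A$. A square matrix is irreducible if it cannot be brought to block-triangular form by simultaneous permutation of rows and columns. $\mathrm{tr}A=\bigoplus_i a_{ii}$ and $\mathrm{Tr}(A)=\bigoplus_{k=1}^{n}\mathrm{tr}A^{k}$. Let $A^{\ast}=I\oplus A\oplus\cdots\oplus A^{n-1}$ and $A^{\times}=AA^{\ast}$. The matrix $A^{+}$ is formed as follows: for each column $\bm{a}^{\times}_i$ of $A^{\times}$, keep it if its diagonal entry $a^{\times}_{ii}$ equals $\mathbb{1}$ and replace it by the zero vector otherwise; then remove the columns (including zero ones) that are linearly dependent on the others (a vector $\bm{y}$ is linearly dependent on $\bm{x}_1,\ldots,\bm{x}_k$ if $\bm{y}=c_1\bm{x}_1\oplus\cdots\oplus c_k\bm{x}_k$ for some scalars $c_i$); the remaining columns form $A^{+}$.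 *)

theory Defs
  imports "HOL-Library.Extended_Real" "HOL-Combinatorics.Permutations"
begin

text \<open>Max-plus algebra R_max,+ modelled inside ereal: the max-plus zero is -\<infinity>,
  the identity is 0, addition is max (Sup), multiplication is +.
  Vectors are nat \<Rightarrow> ereal, matrices nat \<Rightarrow> nat \<Rightarrow> ereal; only indices
  in the stated (finite) index sets matter.\<close>

type_synonym mpvec = "nat \<Rightarrow> ereal"
type_synonym mpmat = "nat \<Rightarrow> nat \<Rightarrow> ereal"

definition mp_mm :: "nat set \<Rightarrow> mpmat \<Rightarrow> mpmat \<Rightarrow> mpmat" where
  "mp_mm K A B = (\<lambda>i j. SUP k\<in>K. A i k + B k j)"

definition mp_mv :: "nat set \<Rightarrow> mpmat \<Rightarrow> mpvec \<Rightarrow> mpvec" where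
  "mp_mv K A x = (\<lambda>i. SUP k\<in>K. A i k + x k)"

definition mp_vm :: "nat set \<Rightarrow> mpvec \<Rightarrow> mpmat \<Rightarrow> mpvec" where
  "mp_vm K u A = (\<lambda>j. SUP k\<in>K. u k + A k j)"

definition mp_dot :: "nat set \<Rightarrow> mpvec \<Rightarrow> mpvec \<Rightarrow> ereal" where
  "mp_dot K u v = (SUP k\<in>K. u k + v k)"

text \<open>Pseudo-inverse of a vector (row \<leftrightarrow> column, entrywise).\<close>
definition mp_pinv :: "mpvec \<Rightarrow> mpvec" where
  "mp_pinv x = (\<lambda>j. if x j = -\<infinity> then -\<infinity> else - x j)"

definition mp_id :: mpmat where
  "mp_id = (\<lambda>i j. if i = j then 0 else -\<infinity>)"

fun mp_pow :: "nat \<Rightarrow> mpmat \<Rightarrow> nat \<Rightarrow> mpmat" where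
  "mp_pow n A 0 = mp_id"
| "mp_pow n A (Suc k) = mp_mm {..<n} (mp_pow n A k) A"

definition mp_tr :: "nat \<Rightarrow> mpmat \<Rightarrow> ereal" where
  "mp_tr n A = (SUP i\<in>{..<n}. A i i)"

definition mp_Tr :: "nat \<Rightarrow> mpmat \<Rightarrow> ereal" where
  "mp_Tr n A = (SUP k\<in>{1..n}. mp_tr n (mp_pow n A k))"

definition mp_star :: "nat \<Rightarrow> mpmat \<Rightarrow> mpmat" where
  "mp_star n A = (\<lambda>i j. SUP k\<in>{..<n}. mp_pow n A k i j)"

definition mp_cross :: "nat \<Rightarrow> mpmat \<Rightarrow> mpmat" where
  "mp_cross n A = mp_mm {..<n} A (mp_star n A)"

definition mp_irreducible :: "nat \<Rightarrow> mpmat \<Rightarrow> bool" where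
  "mp_irreducible n A \<longleftrightarrow>
     \<not> (\<exists>\<sigma> k. \<sigma> permutes {..<n} \<and> 0 < k \<and> k < n \<and>
          (\<forall>i<k. \<forall>j. k \<le> j \<and> j < n \<longrightarrow> A (\<sigma> i) (\<sigma> j) = -\<infinity>))"

text \<open>Linear dependence of an n-vector y on the columns of M indexed by C
  (scalars from R_max,+, i.e. ereal values other than +\<infinity>).\<close>
definition mp_dependent :: "nat \<Rightarrow> mpvec \<Rightarrow> mpmat \<Rightarrow> nat set \<Rightarrow> bool" where
  "mp_dependent n y M C \<longleftrightarrow>
     (\<exists>c::nat \<Rightarrow> ereal. (\<forall>k\<in>C. c k \<noteq> \<infinity>) \<and> (\<forall>i<n. y i = (SUP k\<in>C. c k + M i k)))"

definition mp_kept :: "nat \<Rightarrow> mpmat \<Rightarrow> nat set" where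
  "mp_kept n A = {j. j < n \<and> mp_cross n A j j = 0}"

definition mp_col_repl :: "nat \<Rightarrow> mpmat \<Rightarrow> mpmat" where
  "mp_col_repl n A = (\<lambda>i j. if j \<in> mp_kept n A then mp_cross n A i j else -\<infinity>)"

text \<open>J is a valid outcome of the column-removal procedure: A^+ is the matrix whose
  columns are the columns of A^x with indices in J.\<close>
definition mp_Aplus_cols :: "nat \<Rightarrow> mpmat \<Rightarrow> nat set \<Rightarrow> bool" where
  "mp_Aplus_cols n A J \<longleftrightarrow>
     J \<subseteq> {..<n} \<and>
     (\<forall>j\<in>J. \<not> mp_dependent n (\<lambda>i. mp_col_repl n A i j) (mp_col_repl n A) (J - {j})) \<and>
     (\<forall>j<n. mp_dependent n (\<lambda>i. mp_col_repl n A i j) (mp_col_repl n A) J)"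

end

theory Submission
  imports Defs
begin

lemma sup_attain:
  fixes f :: "'a \<Rightarrow> ereal"
  assumes "finite I" "I \<noteq> {}"
  shows "\<exists>i\<in>I. (SUP i\<in>I. f i) = f i"
proof -
  have "Sup (f ` I) = Max (f ` I)" using assms by (simp add: Max_Sup)
  moreover have "Max (f ` I) \<in> f ` I" using assms by (intro Max_in) auto
  ultimately show ?thesis by auto
qed

definition wt :: "mpmat \<Rightarrow> (nat \<Rightarrow> nat) \<Rightarrow> nat \<Rightarrow> nat \<Rightarrow> ereal" where
  "wt A f a b = (\<Sum>t\<in>{a..<b}. A (f t) (f (Suc t)))"

declare mp_id_def[simp]

lemma ereal_add_ninf: "a \<noteq> \<infinity> \<Longrightarrow> b \<noteq> \<infinity> \<Longrightarrow> a + b \<noteq> (\<infinity>::ereal)"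
  by (cases a; cases b) auto

lemma ereal_minf_add: "b \<noteq> \<infinity> \<Longrightarrow> -\<infinity> + b = (-\<infinity>::ereal)"
  by (cases b) auto

lemma ereal_add_minf: "b \<noteq> \<infinity> \<Longrightarrow> b + -\<infinity> = (-\<infinity>::ereal)"
  by (cases b) auto

locale mpl = fixes n :: nat and A :: mpmat
  assumes Afin: "\<And>i j. i<n \<Longrightarrow> j<n \<Longrightarrow> A i j \<noteq> \<infinity>"
begin

abbreviation P where "P \<equiv> mp_pow n A"

lemma P_Suc: "P (Suc l) i j = (SUP k\<in>{..<n}. P l i k + A k j)"
  by (simp add: mp_mm_def)

lemma P0: "P 0 i j = (if i = j then 0 else -\<infinity>)"
  by (simp add: mp_id_def)

lemma P_attain: "i < n \<Longrightarrow> \<exists>k<n. P (Suc l) i j = P l i k + A k j"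
proof -
  assume "i < n"
  then obtain k where "k \<in> {..<n}" "(SUP k\<in>{..<n}. P l i k + A k j) = P l i k + A k j"
    using sup_attain[of "{..<n}" "\<lambda>k. P l i k + A k j"] by auto
  then show ?thesis unfolding P_Suc by blast
qed

lemma P_ninf: "i < n \<Longrightarrow> j < n \<Longrightarrow> P l i j \<noteq> \<infinity>"
proof (induction l arbitrary: j)
  case 0 then show ?case by (simp add: P0)
next
  case (Suc l)
  obtain k where k: "k<n" "P (Suc l) i j = P l i k + A k j" using P_attain Suc by blast
  then show ?case using Suc.IH[of k] Afin[of k j] Suc.prems by (simp add: ereal_add_ninf)
qed

lemma P1: "i < n \<Longrightarrow> j < n \<Longrightarrow> P 1 i j = A i j"
proof -
  assume ij: "i < n" "j < n"
  have "P 1 i j = (SUP k\<in>{..<n}. P 0 i k + A k j)" using P_Suc[of 0] by simp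
  also have "\<dots> = A i j"
  proof (rule antisym)
    show "(SUP k\<in>{..<n}. P 0 i k + A k j) \<le> A i j"
      by (rule SUP_least) (use ij Afin in \<open>auto simp: ereal_minf_add\<close>)
    show "A i j \<le> (SUP k\<in>{..<n}. P 0 i k + A k j)"
      using ij by (intro SUP_upper2[of i]) (auto simp: P0)
  qed
  finally show ?thesis .
qed

lemma P_mult: "i < n \<Longrightarrow> v < n \<Longrightarrow> j < n \<Longrightarrow> P a i v + P b v j \<le> P (a+b) i j"
proof (induction b arbitrary: j)
  case 0 then show ?case using P_ninf by (auto simp: ereal_add_minf)
next
  case (Suc b)
  show ?case
  proof (cases "P a i v = -\<infinity>")
    case True
    have "P (Suc b) v j \<noteq> \<infinity>" using P_ninf Suc.prems by blast
    then have eq: "P a i v + P (Suc b) v j = -\<infinity>" by (subst True, rule ereal_minf_add)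
    show ?thesis unfolding eq by simp
  next
    case False
    have "P a i v + P (Suc b) v j = (SUP k\<in>{..<n}. P a i v + (P b v k + A k j))"
      unfolding P_Suc using False Suc.prems by (intro SUP_ereal_add_right[symmetric]) auto
    also have "\<dots> \<le> (SUP k\<in>{..<n}. P (a+b) i k + A k j)"
    proof (rule SUP_mono)
      fix k assume k: "k \<in> {..<n}"
      have "P a i v + (P b v k + A k j) = (P a i v + P b v k) + A k j" by (simp add: add.assoc)
      also have "\<dots> \<le> P (a+b) i k + A k j" using Suc.IH[of k] k Suc.prems by (intro add_right_mono) auto
      finally show "\<exists>m\<in>{..<n}. P a i v + (P b v k + A k j) \<le> P (a+b) i m + A m j" using k by blast
    qed
    also have "\<dots> = P (a + Suc b) i j" by (simp add: mp_mm_def)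
    finally show ?thesis .
  qed
qed

lemma P_split: "i < n \<Longrightarrow> j < n \<Longrightarrow> \<exists>v<n. P (a+b) i j \<le> P a i v + P b v j"
proof (induction b arbitrary: j)
  case 0 then show ?case by (auto simp: P0)
next
  case (Suc b)
  obtain k where k0: "k<n" "P (Suc (a + b)) i j = P (a+b) i k + A k j" using P_attain Suc.prems
    by blast
  then have k: "k<n" "P (a + Suc b) i j = P (a+b) i k + A k j" by simp_all
  obtain v where v: "v<n" "P (a+b) i k \<le> P a i v + P b v k" using Suc.IH[OF Suc.prems(1) k(1)] by blast
  have "P (a + Suc b) i j \<le> P a i v + P b v k + A k j" unfolding k(2) by (rule add_right_mono[OF v(2)])
  also have "\<dots> = P a i v + (P b v k + A k j)" by (simp add: add.assoc)
  also have "\<dots> \<le> P a i v + P (Suc b) v j"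
  proof -
    have "P b v k + A k j \<le> P (Suc b) v j" unfolding P_Suc using k(1) by (intro SUP_upper) auto
    then show ?thesis by (rule add_left_mono)
  qed
  finally show ?case using v by blast
qed

lemma walk_le: "(\<forall>t\<le>l. f t < n) \<Longrightarrow> wt A f 0 l \<le> P l (f 0) (f l)"
proof (induction l)
  case 0 then show ?case by (simp add: wt_def P0)
next
  case (Suc l)
  have "wt A f 0 (Suc l) = wt A f 0 l + A (f l) (f (Suc l))" by (simp add: wt_def)
  also have "\<dots> \<le> P l (f 0) (f l) + A (f l) (f (Suc l))" using Suc by (intro add_right_mono) auto
  also have "\<dots> \<le> P (Suc l) (f 0) (f (Suc l))"
    unfolding P_Suc by (rule SUP_upper) (use Suc.prems in auto)
  finally show ?case .
qed

lemma walk_le_gen: assumes "a \<le> b" "\<forall>t\<le>b. f t < n"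
  shows "wt A f a b \<le> P (b-a) (f a) (f b)"
proof -
  define g where "g t = f (t + a)" for t
  have "wt A g 0 (b-a) \<le> P (b-a) (g 0) (g (b-a))"
    using assms by (intro walk_le) (auto simp: g_def)
  moreover have "wt A g 0 (b-a) = wt A f a b"
  proof -
    have e: "{a..<b} = {0+a..<(b-a)+a}" using assms by simp
    show ?thesis unfolding wt_def g_def e sum.shift_bounds_nat_ivl by simp
  qed
  moreover have "g 0 = f a" "g (b-a) = f b" using assms(1) by (simp_all add: g_def)
  ultimately show ?thesis by simp
qed

end


context mpl begin

lemma P_walk: "i<n \<Longrightarrow> j<n \<Longrightarrow> P l i j \<noteq> -\<infinity> \<Longrightarrow>
   \<exists>f. f 0 = i \<and> f l = j \<and> (\<forall>t\<le>l. f t < n) \<and> P l i j = wt A f 0 l"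
proof (induction l arbitrary: j)
  case 0
  then have "i = j" by (auto split: if_splits)
  then show ?case using 0 by (intro exI[of _ "\<lambda>_. i"]) (auto simp: wt_def)
next
  case (Suc l)
  obtain k where k: "k<n" "P (Suc l) i j = P l i k + A k j" using P_attain Suc.prems by blast
  have "P l i k \<noteq> -\<infinity>"
  proof
    assume "P l i k = -\<infinity>"
    then have "P l i k + A k j = -\<infinity>" using Afin[of k j] k(1) Suc.prems by (simp add: ereal_minf_add)
    then show False using k Suc.prems by simp
  qed
  then obtain f where f: "f 0 = i" "f l = k" "\<forall>t\<le>l. f t < n" "P l i k = wt A f 0 l"
    using Suc.IH[OF Suc.prems(1) k(1)] by blast
  define g where "g = f(Suc l := j)"
  have w0: "wt A g 0 (Suc l) = wt A g 0 l + A (g l) (g (Suc l))" by (simp add: wt_def)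
  have w1: "wt A g 0 l = wt A f 0 l" unfolding wt_def g_def by (intro sum.cong) auto
  have w2: "g l = k" "g (Suc l) = j" by (simp_all add: g_def f(2))
  have "wt A g 0 (Suc l) = P (Suc l) i j" unfolding w0 w1 w2 k(2) f(4) ..
  moreover have "g 0 = i" "g (Suc l) = j" "\<forall>t\<le>Suc l. g t < n"
    using f Suc.prems by (auto simp: g_def le_Suc_eq)
  ultimately show ?case by metis
qed

lemma wt_split: "a \<le> b \<Longrightarrow> b \<le> c \<Longrightarrow> wt A f a c = wt A f a b + wt A f b c"
  unfolding wt_def by (simp add: sum.atLeastLessThan_concat)

end

locale mpl2 = mpl +
  assumes n_pos: "1 \<le> n" and Tr0: "mp_Tr n A = 0"
begin

lemma ne[simp]: "{..<n} \<noteq> {}" "{1..n} \<noteq> {}" using n_pos by (auto simp: lessThan_empty_iff)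

definition X where "X i j = (SUP l\<in>{1..n}. P l i j)"

lemma P_tr: "1 \<le> c \<Longrightarrow> c \<le> n \<Longrightarrow> v < n \<Longrightarrow> P c v v \<le> 0"
proof -
  assume c: "1 \<le> c" "c \<le> n" and v: "v < n"
  have "P c v v \<le> mp_tr n (P c)" unfolding mp_tr_def using v by (intro SUP_upper) auto
  also have "\<dots> \<le> mp_Tr n A" unfolding mp_Tr_def using c by (intro SUP_upper) auto
  finally show ?thesis using Tr0 by simp
qed

lemma Tr_attain: "\<exists>c\<in>{1..n}. \<exists>v<n. P c v v = 0"
proof -
  obtain c where c: "c\<in>{1..n}" "mp_Tr n A = mp_tr n (P c)"
    using sup_attain[of "{1..n}" "\<lambda>c. mp_tr n (P c)"] n_pos unfolding mp_Tr_def by auto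
  obtain v where v: "v \<in> {..<n}" "mp_tr n (P c) = P c v v"
    using sup_attain[of "{..<n}" "\<lambda>v. P c v v"] n_pos unfolding mp_tr_def by auto
  show ?thesis using c v Tr0 by auto
qed

lemma X_upper: "1 \<le> l \<Longrightarrow> l \<le> n \<Longrightarrow> P l i j \<le> X i j"
  unfolding X_def by (intro SUP_upper) auto

lemma X_attain: "\<exists>l\<in>{1..n}. X i j = P l i j"
  unfolding X_def using sup_attain[of "{1..n}" "\<lambda>l. P l i j"] n_pos by auto

lemma X_ninf: "i<n \<Longrightarrow> j<n \<Longrightarrow> X i j \<noteq> \<infinity>"
  using X_attain[of i j] P_ninf by metis

lemma X_diag: "j<n \<Longrightarrow> X j j \<le> 0"
  using X_attain[of j j] P_tr by fastforce

lemma shorten: "1 \<le> l \<Longrightarrow> i<n \<Longrightarrow> j<n \<Longrightarrow> P l i j \<le> X i j"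
proof (induction l arbitrary: i j rule: less_induct)
  case (less l)
  show ?case
  proof (cases "l \<le> n")
    case True then show ?thesis using less by (intro X_upper) auto
  next
    case ln: False
    show ?thesis
    proof (cases "P l i j = -\<infinity>")
      case True then show ?thesis by simp
    next
      case False
      obtain f where f: "f 0 = i" "f l = j" "\<forall>t\<le>l. f t < n" "P l i j = wt A f 0 l"
        using P_walk[OF less.prems(2,3) False] by blast
      have "\<not> inj_on f {..n}"
      proof
        assume "inj_on f {..n}"
        then have "card (f ` {..n}) = card {..n}" by (rule card_image)
        moreover have "f ` {..n} \<subseteq> {..<n}" using f(3) ln by auto
        then have "card (f ` {..n}) \<le> n" using card_mono[of "{..<n}"] by fastforce
        ultimately show False by simp
      qed
      then obtain a b where ab: "a < b" "b \<le> n" "f a = f b"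
        unfolding inj_on_def by (metis atMost_iff linorder_neqE_nat)
      define v where "v = f a"
      have vn: "v < n" using f(3) ab ln by (auto simp: v_def)
      have "P l i j = wt A f 0 a + wt A f a b + wt A f b l"
        using f(4) ab ln wt_split[of a b l f] wt_split[of 0 a l f] by (simp add: add.assoc)
      also have "\<dots> \<le> P a i v + 0 + P (l-b) v j"
      proof (intro add_mono)
        show "wt A f 0 a \<le> P a i v" using walk_le_gen[of 0 a f] f ab ln by (simp add: v_def)
        have "wt A f a b \<le> P (b-a) v v" using walk_le_gen[of a b f] f ab ln by (simp add: v_def)
        also have "\<dots> \<le> 0" using ab vn by (intro P_tr) auto
        finally show "wt A f a b \<le> 0" .
        show "wt A f b l \<le> P (l-b) v j" using walk_le_gen[of b l f] f ab ln by (simp add: v_def)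
      qed
      also have "\<dots> = P a i v + P (l-b) v j" by simp
      also have "\<dots> \<le> P (a + (l-b)) i j" using P_mult less.prems vn by blast
      also have "\<dots> \<le> X i j" using ab ln less.prems by (intro less.IH) auto
      finally show ?thesis .
    qed
  qed
qed

lemma cross_eq: "i<n \<Longrightarrow> j<n \<Longrightarrow> mp_cross n A i j = X i j"
proof -
  assume ij: "i<n" "j<n"
  have c: "mp_cross n A i j = (SUP k\<in>{..<n}. A i k + (SUP l\<in>{..<n}. P l k j))"
    unfolding mp_cross_def mp_mm_def mp_star_def by simp
  show ?thesis unfolding c
  proof (rule antisym)
    show "(SUP k\<in>{..<n}. A i k + (SUP l\<in>{..<n}. P l k j)) \<le> X i j"
    proof (rule SUP_least)
      fix k assume k: "k \<in> {..<n}"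
      obtain l where l: "l \<in> {..<n}" "(SUP l\<in>{..<n}. P l k j) = P l k j"
        using sup_attain[of "{..<n}" "\<lambda>l. P l k j"] n_pos by auto
      have "A i k + P l k j = P 1 i k + P l k j" using P1 ij k by simp
      also have "\<dots> \<le> P (1+l) i j" using P_mult ij k by blast
      also have "\<dots> \<le> X i j" using l by (intro X_upper) auto
      finally show "A i k + (SUP l\<in>{..<n}. P l k j) \<le> X i j" using l by simp
    qed
    show "X i j \<le> (SUP k\<in>{..<n}. A i k + (SUP l\<in>{..<n}. P l k j))"
      unfolding X_def
    proof (rule SUP_least)
      fix l assume l: "l \<in> {1..n}"
      then have l1: "l = 1 + (l-1)" by auto
      obtain v where v: "v<n" "P (1 + (l-1)) i j \<le> P 1 i v + P (l-1) v j"
        using P_split ij by blast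
      have "P l i j \<le> A i v + P (l-1) v j" using v l1 P1 ij by simp
      also have "\<dots> \<le> A i v + (SUP l\<in>{..<n}. P l v j)"
        using l by (intro add_left_mono SUP_upper) auto
      also have "\<dots> \<le> (SUP k\<in>{..<n}. A i k + (SUP l\<in>{..<n}. P l k j))"
        using v by (intro SUP_upper) auto
      finally show "P l i j \<le> \<dots>" .
    qed
  qed
qed

end


context mpl2 begin

lemma reach: assumes irr: "mp_irreducible n A" and ij: "i<n" "j<n"
  shows "\<exists>l. P l i j \<noteq> -\<infinity>"
proof (rule ccontr)
  assume nr: "\<not> ?thesis"
  define S where "S = {k. k<n \<and> (\<exists>l. P l i k \<noteq> -\<infinity>)}"
  define T where "T = {..<n} - S"
  have closed: "A a b = -\<infinity>" if a: "a \<in> S" and b: "b \<in> T" for a b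
  proof (rule ccontr)
    assume Aab: "A a b \<noteq> -\<infinity>"
    obtain l where l: "P l i a \<noteq> -\<infinity>" "a < n" using a by (auto simp: S_def)
    have bn: "b < n" using b by (auto simp: T_def)
    have "P l i a + P 1 a b \<le> P (l+1) i b" using P_mult ij l bn by blast
    moreover have "P l i a + P 1 a b \<noteq> -\<infinity>" using P1[OF l(2) bn] Aab l(1) by simp
    ultimately have "P (l+1) i b \<noteq> -\<infinity>" by auto
    then have "b \<in> S" unfolding S_def using bn by blast
    then show False using b by (auto simp: T_def)
  qed
  have Ssub: "S \<subseteq> {..<n}" by (auto simp: S_def)
  have finS: "finite S" using Ssub finite_subset by blast
  have iS: "i \<in> S" using ij by (auto simp: S_def intro: exI[of _ 0])
  have jS: "j \<notin> S" using nr by (auto simp: S_def)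
  define k where "k = card S"
  have k0: "0 < k" using iS finS by (auto simp: k_def card_gt_0_iff)
  have kn: "k < n"
  proof -
    have "S \<subset> {..<n}" using Ssub jS ij by auto
    then show ?thesis unfolding k_def using psubset_card_mono[of "{..<n}" S] by simp
  qed
  have cT: "card T = n - k" unfolding T_def k_def using Ssub by (simp add: card_Diff_subset finS)
  obtain h1 where h1: "bij_betw h1 {0..<k} S" using ex_bij_betw_nat_finite[OF finS] k_def by auto
  obtain h2 where h2: "bij_betw h2 {0..<n-k} T"
    using ex_bij_betw_nat_finite[of T] cT by (auto simp: T_def)
  define \<sigma> where "\<sigma> x = (if x < k then h1 x else if x < n then h2 (x - k) else x)" for x
  have b1: "bij_betw \<sigma> {0..<k} S"
    using h1 by (rule bij_betw_cong[THEN iffD1, rotated]) (auto simp: \<sigma>_def)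
  have sh: "bij_betw (\<lambda>x. x - k) {k..<n} {0..<n-k}"
    by (rule bij_betw_byWitness[where f'="\<lambda>x. x + k"]) auto
  have b2': "bij_betw (h2 \<circ> (\<lambda>x. x - k)) {k..<n} T" using bij_betw_trans[OF sh h2] .
  have b2: "bij_betw \<sigma> {k..<n} T"
    using b2' by (rule bij_betw_cong[THEN iffD1, rotated]) (auto simp: \<sigma>_def)
  have "bij_betw \<sigma> ({0..<k} \<union> {k..<n}) (S \<union> T)"
    by (rule bij_betw_combine[OF b1 b2]) (auto simp: T_def)
  moreover have "{0..<k} \<union> {k..<n} = {..<n}" using kn by auto
  moreover have "S \<union> T = {..<n}" using Ssub by (auto simp: T_def)
  ultimately have bs: "bij_betw \<sigma> {..<n} {..<n}" by simp
  have perm: "\<sigma> permutes {..<n}"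
    by (rule bij_imp_permutes[OF bs]) (use kn in \<open>auto simp: \<sigma>_def\<close>)
  have "\<forall>i'<k. \<forall>j'. k \<le> j' \<and> j' < n \<longrightarrow> A (\<sigma> i') (\<sigma> j') = -\<infinity>"
  proof (intro allI impI)
    fix i' j' assume "i' < k" "k \<le> j' \<and> j' < n"
    then have "\<sigma> i' \<in> S" "\<sigma> j' \<in> T" using b1 b2 by (auto simp: bij_betw_def)
    then show "A (\<sigma> i') (\<sigma> j') = -\<infinity>" by (rule closed)
  qed
  then show False using irr perm k0 kn unfolding mp_irreducible_def by blast
qed

lemma X_fin: assumes irr: "mp_irreducible n A" and ij: "i<n" "j<n"
  shows "X i j \<noteq> -\<infinity>"
proof -
  have "\<exists>l\<ge>1. P l i j \<noteq> -\<infinity>"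
  proof (cases "i = j")
    case False
    obtain l where "P l i j \<noteq> -\<infinity>" using reach[OF irr ij] by blast
    moreover have "l \<noteq> 0" using calculation False by (cases l) auto
    ultimately show ?thesis by (intro exI[of _ l]) auto
  next
    case True
    show ?thesis
    proof (cases "n = 1")
      case True
      then obtain c v where "c \<in> {1..n}" "v < n" "P c v v = 0" using Tr_attain by blast
      then show ?thesis using True \<open>i = j\<close> ij by (intro exI[of _ c]) auto
    next
      case False
      define k where "k = (if i = 0 then 1 else 0::nat)"
      have kn: "k < n" "k \<noteq> i" using False n_pos by (auto simp: k_def)
      obtain l1 where l1: "P l1 i k \<noteq> -\<infinity>" using reach[OF irr ij(1) kn(1)] by blast
      obtain l2 where l2: "P l2 k i \<noteq> -\<infinity>" using reach[OF irr kn(1) ij(1)] by blast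
      have "l1 \<noteq> 0" using l1 kn by (cases l1) auto
      have "P l1 i k + P l2 k i \<le> P (l1+l2) i i" using P_mult ij kn by blast
      moreover have "P l1 i k + P l2 k i \<noteq> -\<infinity>" using l1 l2 by simp
      ultimately have "P (l1+l2) i i \<noteq> -\<infinity>" by auto
      then show ?thesis using \<open>l1 \<noteq> 0\<close> \<open>i = j\<close> by (intro exI[of _ "l1+l2"]) auto
    qed
  qed
  then obtain l where "l \<ge> 1" "P l i j \<noteq> -\<infinity>" by blast
  moreover have "P l i j \<le> X i j" using calculation ij by (intro shorten) auto
  ultimately show ?thesis by auto
qed

lemma eig_le: assumes fx: "\<forall>j<n. x j \<noteq> \<infinity> \<and> x j \<noteq> -\<infinity>"
    and ex: "\<forall>i<n. mp_mv {..<n} A x i = x i"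
  shows "k<n \<Longrightarrow> j<n \<Longrightarrow> P l k j + x j \<le> x k"
proof (induction l arbitrary: j)
  case 0 then show ?case using fx by (auto simp: ereal_minf_add)
next
  case (Suc l)
  obtain t where t: "t<n" "P (Suc l) k j = P l k t + A t j" using P_attain Suc.prems by blast
  have "A t j + x j \<le> x t"
  proof -
    have "A t j + x j \<le> mp_mv {..<n} A x t" unfolding mp_mv_def using Suc.prems by (intro SUP_upper) auto
    then show ?thesis using ex t by simp
  qed
  then have "P l k t + (A t j + x j) \<le> P l k t + x t" by (rule add_left_mono)
  also have "\<dots> \<le> x k" using Suc.IH[of t] t Suc.prems by simp
  finally show ?case using t by (simp add: add.assoc)
qed

lemma eig_X: assumes fx: "\<forall>j<n. x j \<noteq> \<infinity> \<and> x j \<noteq> -\<infinity>"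
    and ex: "\<forall>i<n. mp_mv {..<n} A x i = x i" and kj: "k<n" "j<n"
  shows "X k j + x j \<le> x k"
  using X_attain[of k j] eig_le[OF fx ex kj] by metis

end


lemma ereal_cancel0: "x = w + x \<Longrightarrow> x \<noteq> \<infinity> \<Longrightarrow> x \<noteq> -\<infinity> \<Longrightarrow> w = (0::ereal)"
  by (cases x; cases w) auto

context mpl2 begin

lemma chain: assumes fx: "\<forall>j<n. x j \<noteq> \<infinity> \<and> x j \<noteq> -\<infinity>"
    and ex: "\<forall>i<n. mp_mv {..<n} A x i = x i" and i: "i<n"
  shows "\<exists>j<n. X j j = 0 \<and> x i \<le> X i j + x j"
proof -
  have "\<forall>k<n. \<exists>t<n. x k = A k t + x t"
  proof (intro allI impI)
    fix k assume k: "k<n"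
    obtain t where "t \<in> {..<n}" "(SUP t\<in>{..<n}. A k t + x t) = A k t + x t"
      using sup_attain[of "{..<n}" "\<lambda>t. A k t + x t"] by auto
    then show "\<exists>t<n. x k = A k t + x t" using ex k unfolding mp_mv_def by auto
  qed
  then obtain nx where nx: "\<And>k. k<n \<Longrightarrow> nx k < n \<and> x k = A k (nx k) + x (nx k)" by metis
  define f where "f t = (nx ^^ t) i" for t
  have fs: "f (Suc t) = nx (f t)" for t by (simp add: f_def)
  have fn: "f t < n" for t by (induction t) (use i nx in \<open>auto simp: f_def\<close>)
  have step: "x (f t) = A (f t) (f (Suc t)) + x (f (Suc t))" for t using nx[OF fn[of t]] fs by simp
  have tele: "x (f a) = wt A f a (a+d) + x (f (a+d))" for a d
  proof (induction d)
    case 0 then show ?case by (simp add: wt_def)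
  next
    case (Suc d)
    have "wt A f a (a + Suc d) = wt A f a (a+d) + A (f (a+d)) (f (Suc (a+d)))"
      by (simp add: wt_def)
    then show ?case using Suc step[of "a+d"] by (simp add: add.assoc)
  qed
  have "\<not> inj_on f {..n}"
  proof
    assume "inj_on f {..n}"
    then have "card (f ` {..n}) = card {..n}" by (rule card_image)
    moreover have "f ` {..n} \<subseteq> {..<n}" using fn by auto
    then have "card (f ` {..n}) \<le> n" using card_mono[of "{..<n}"] by fastforce
    ultimately show False by simp
  qed
  then obtain a b where ab: "a < b" "b \<le> n" "f a = f b"
    unfolding inj_on_def by (metis atMost_iff linorder_neqE_nat)
  define j where "j = f a"
  have jn: "j < n" using fn by (simp add: j_def)
  have "x j = wt A f a b + x j" using tele[of a "b-a"] ab by (simp add: j_def)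
  then have w0: "wt A f a b = 0" using fx jn ereal_cancel0 by blast
  have "wt A f a b \<le> P (b-a) j j" using walk_le_gen[of a b f] ab fn by (simp add: j_def)
  also have "\<dots> \<le> X j j" using ab by (intro X_upper) auto
  finally have "X j j = 0" using w0 X_diag[OF jn] by simp
  moreover have "x i \<le> X i j + x j"
  proof (cases "a = 0")
    case True
    then have "j = i" by (simp add: j_def f_def)
    then show ?thesis using \<open>X j j = 0\<close> by simp
  next
    case False
    have xi: "x i = wt A f 0 a + x j" using tele[of 0 a] by (simp add: j_def f_def)
    have "wt A f 0 a \<le> P a i j" using walk_le_gen[of 0 a f] fn by (simp add: j_def f_def)
    also have "\<dots> \<le> X i j" using False ab by (intro X_upper) auto
    finally show ?thesis unfolding xi by (rule add_right_mono)
  qed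
  ultimately show ?thesis using jn by blast
qed

lemma AX_le: "i<n \<Longrightarrow> k<n \<Longrightarrow> j<n \<Longrightarrow> A i k + X k j \<le> X i j"
proof -
  assume ikj: "i<n" "k<n" "j<n"
  obtain l where l: "l \<in> {1..n}" "X k j = P l k j" using X_attain by blast
  have "A i k + X k j = P 1 i k + P l k j" using l P1 ikj by simp
  also have "\<dots> \<le> P (1+l) i j" using P_mult ikj by blast
  also have "\<dots> \<le> X i j" using ikj by (intro shorten) auto
  finally show ?thesis .
qed

lemma X_le_AX: "i<n \<Longrightarrow> j<n \<Longrightarrow> X j j = 0 \<Longrightarrow> \<exists>k<n. X i j \<le> A i k + X k j"
proof -
  assume ij: "i<n" "j<n" and jj: "X j j = 0"
  obtain l where l: "l \<in> {1..n}" "X i j = P l i j" using X_attain by blast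
  then have l1: "l = 1 + (l-1)" by auto
  obtain v where v: "v<n" "P (1 + (l-1)) i j \<le> P 1 i v + P (l-1) v j" using P_split ij by blast
  have "P (l-1) v j \<le> X v j"
  proof (cases "l - 1 = 0")
    case True then show ?thesis using jj by auto
  next
    case False then show ?thesis using v ij by (intro shorten) auto
  qed
  then have "X i j \<le> A i v + X v j" using v l l1 P1 ij
    by (metis add_left_mono order_trans)
  then show ?thesis using v by blast
qed

end


lemma fin_real: "x \<noteq> \<infinity> \<Longrightarrow> x \<noteq> -\<infinity> \<Longrightarrow> x = ereal (real_of_ereal x)"
  by (cases x) auto

lemma supr: assumes "finite I" "I \<noteq> {}" "\<And>i. i\<in>I \<Longrightarrow> f i = ereal (g i)"
  shows "\<exists>i\<in>I. (SUP i\<in>I. f i) = ereal (g i) \<and> (\<forall>i'\<in>I. g i' \<le> g i)"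
proof -
  obtain i where i: "i\<in>I" "(SUP i\<in>I. f i) = f i" using sup_attain[OF assms(1,2)] by blast
  have "\<forall>i'\<in>I. g i' \<le> g i"
  proof
    fix i' assume i': "i' \<in> I"
    have "f i' \<le> (SUP i\<in>I. f i)" using i' by (rule SUP_upper)
    then show "g i' \<le> g i" using i i' assms(3) by simp
  qed
  then show ?thesis using i assms(3) by auto
qed

theorem theorem6:
  fixes n m :: nat and r :: "nat \<Rightarrow> nat \<Rightarrow> real" and w :: "nat \<Rightarrow> real"
    and A :: mpmat and J :: "nat set"
    and p qm u x0 :: mpvec and \<phi> :: "mpvec \<Rightarrow> ereal" and S0 :: "mpvec set" and \<Delta> :: ereal
  assumes n_pos: "1 \<le> n" and m_pos: "1 \<le> m"
    and A_entries: "\<forall>i<n. \<forall>j<n. A i j \<noteq> \<infinity>"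
    and A_irr: "mp_irreducible n A"
    and A_Tr: "mp_Tr n A = 0"
    and Aplus: "mp_Aplus_cols n A J"
    and p_def: "p = (\<lambda>j. SUP i\<in>{..<m}. ereal (w i) + ereal (r i j))"
    and qm_def: "qm = (\<lambda>j. SUP i\<in>{..<m}. ereal (w i) + mp_pinv (\<lambda>k. ereal (r i k)) j)"
    and phi_def: "\<phi> = (\<lambda>x. max (mp_dot {..<n} (mp_pinv x) p) (mp_dot {..<n} qm x))"
    and S0_def: "S0 = {x. (\<forall>j<n. x j \<noteq> \<infinity> \<and> x j \<noteq> -\<infinity>) \<and> (\<forall>i<n. mp_mv {..<n} A x i = x i)}"
    and u_def: "u = mp_mv J (mp_col_repl n A) (mp_pinv (mp_vm {..<n} qm (mp_col_repl n A)))"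
    and Delta_def: "\<Delta> = mp_dot {..<n} (mp_pinv u) p / 2"
    and x0_def: "x0 = (\<lambda>i. \<Delta> + u i)"
  shows "x0 \<in> S0 \<and> \<phi> x0 = \<Delta> \<and> (\<forall>x\<in>S0. \<Delta> \<le> \<phi> x)"
proof -
  interpret mpl2 n A
    by unfold_locales (use A_entries n_pos A_Tr in auto)
  define C where "C = mp_col_repl n A"
  have kept: "mp_kept n A = {j. j<n \<and> X j j = 0}" unfolding mp_kept_def using cross_eq by auto
  have Cdef: "C i j = (if j<n \<and> X j j = 0 then X i j else -\<infinity>)" if "i<n" for i j
    unfolding C_def mp_col_repl_def kept using cross_eq that by auto
  define Xr where "Xr i j = real_of_ereal (X i j)" for i j
  have Xf: "X i j = ereal (Xr i j)" if "i<n" "j<n" for i j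
    unfolding Xr_def using X_ninf[OF that] X_fin[OF A_irr that] by (rule fin_real)
  have Cninf: "C i k \<noteq> \<infinity>" if "i<n" for i k using Cdef[OF that] X_ninf[OF that] by auto
  have Jsub: "J \<subseteq> {..<n}" using Aplus unfolding mp_Aplus_cols_def by blast
  have finJ: "finite J" using Jsub finite_subset by blast
  have JK: "j < n \<and> X j j = 0" if jJ: "j \<in> J" for j
  proof (rule ccontr)
    assume nk: "\<not> (j < n \<and> X j j = 0)"
    then have col: "C i j = -\<infinity>" for i
      unfolding C_def mp_col_repl_def kept by auto
    have "mp_dependent n (\<lambda>i. C i j) C (J - {j})"
      unfolding mp_dependent_def
    proof (intro exI[of _ "\<lambda>_. -\<infinity>"] conjI ballI allI impI)
      fix i assume i: "i<n"
      have "(SUP k\<in>J - {j}. -\<infinity> + C i k) \<le> -\<infinity>"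
        by (rule SUP_least) (simp add: ereal_minf_add[OF Cninf[OF i]])
      then show "C i j = (SUP k\<in>J - {j}. -\<infinity> + C i k)" using col by simp
    qed auto
    then show False using Aplus jJ unfolding mp_Aplus_cols_def C_def by blast
  qed
  have Jne: "J \<noteq> {}"
  proof
    assume Je: "J = {}"
    obtain c v where cv: "c \<in> {1..n}" "v < n" "P c v v = 0" using Tr_attain by blast
    have "0 \<le> X v v" using X_upper[of c v v] cv by auto
    then have vv: "X v v = 0" using X_diag[OF cv(2)] by simp
    have "mp_dependent n (\<lambda>i. C i v) C J" using Aplus cv(2) unfolding mp_Aplus_cols_def C_def by blast
    then have "C v v = -\<infinity>" using Je cv(2) unfolding mp_dependent_def by (auto simp: bot_ereal_def)
    then show False using Cdef[OF cv(2)] vv cv(2) by simp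
  qed
  define qr where "qr k = real_of_ereal (qm k)" for k
  define pr where "pr k = real_of_ereal (p k)" for k
  have mne: "{..<m} \<noteq> {}" using m_pos by (auto simp: lessThan_empty_iff)
  have qf: "qm k = ereal (qr k)" for k
  proof -
    have "qm k = (SUP i\<in>{..<m}. ereal (w i - r i k))" unfolding qm_def mp_pinv_def by simp
    then obtain i where "qm k = ereal (w i - r i k)"
      using supr[of "{..<m}" "\<lambda>i. ereal (w i - r i k)" "\<lambda>i. w i - r i k"] mne by auto
    then show ?thesis unfolding qr_def by simp
  qed
  have pf: "p k = ereal (pr k)" for k
  proof -
    have "p k = (SUP i\<in>{..<m}. ereal (w i + r i k))" unfolding p_def by simp
    then obtain i where "p k = ereal (w i + r i k)"
      using supr[of "{..<m}" "\<lambda>i. ereal (w i + r i k)" "\<lambda>i. w i + r i k"] mne by auto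
    then show ?thesis unfolding pr_def by simp
  qed
  define s where "s = mp_vm {..<n} qm C"
  define sr where "sr j = real_of_ereal (s j)" for j
  have sfact: "s j = ereal (sr j) \<and> (\<exists>k<n. sr j = qr k + Xr k j) \<and> (\<forall>k<n. qr k + Xr k j \<le> sr j)"
    if jJ: "j \<in> J" for j
  proof -
    have "s j = (SUP k\<in>{..<n}. qm k + C k j)" unfolding s_def mp_vm_def by simp
    moreover have "qm k + C k j = ereal (qr k + Xr k j)" if "k \<in> {..<n}" for k
      using that JK[OF jJ] Cdef[of k j] qf Xf[of k j] by simp
    ultimately obtain k where "k<n" "s j = ereal (qr k + Xr k j)" "\<forall>k'<n. qr k' + Xr k' j \<le> qr k + Xr k j"
      using supr[of "{..<n}" "\<lambda>k. qm k + C k j" "\<lambda>k. qr k + Xr k j"] by auto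
    then show ?thesis unfolding sr_def by auto
  qed
  define ur where "ur i = real_of_ereal (u i)" for i
  have ufact: "u i = ereal (ur i) \<and> (\<exists>j\<in>J. ur i = Xr i j - sr j) \<and> (\<forall>j\<in>J. Xr i j - sr j \<le> ur i)"
    if i: "i<n" for i
  proof -
    have "u i = (SUP j\<in>J. C i j + mp_pinv s j)" unfolding u_def mp_mv_def s_def C_def by simp
    moreover have "C i j + mp_pinv s j = ereal (Xr i j - sr j)" if "j \<in> J" for j
      using that JK[OF that] Cdef[OF i, of j] sfact[OF that] Xf[OF i, of j] by (simp add: mp_pinv_def)
    ultimately obtain j where "j\<in>J" "u i = ereal (Xr i j - sr j)" "\<forall>j'\<in>J. Xr i j' - sr j' \<le> Xr i j - sr j"
      using supr[of J "\<lambda>j. C i j + mp_pinv s j" "\<lambda>j. Xr i j - sr j"] finJ Jne by auto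
    then show ?thesis unfolding ur_def by auto
  qed
  define D where "D = mp_dot {..<n} (mp_pinv u) p"
  obtain dr where dfact: "D = ereal dr" "\<exists>k<n. dr = pr k - ur k" "\<forall>k<n. pr k - ur k \<le> dr"
  proof -
    have "mp_pinv u k + p k = ereal (pr k - ur k)" if "k \<in> {..<n}" for k
      using that ufact[of k] pf[of k] by (simp add: mp_pinv_def)
    then obtain k where "k<n" "D = ereal (pr k - ur k)" "\<forall>k'<n. pr k' - ur k' \<le> pr k - ur k"
      using supr[of "{..<n}" "\<lambda>k. mp_pinv u k + p k" "\<lambda>k. pr k - ur k"] unfolding D_def mp_dot_def by auto
    then show ?thesis using that by blast
  qed
  have Df: "\<Delta> = ereal (dr/2)" unfolding Delta_def D_def[symmetric] dfact(1) by simp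
  have x0f: "x0 i = ereal (dr/2 + ur i)" if "i<n" for i
    using ufact[OF that] Df unfolding x0_def by simp
  have G1: "x0 \<in> S0"
  proof -
    have "mp_mv {..<n} A x0 i = x0 i" if i: "i<n" for i
    proof (rule antisym)
      show "mp_mv {..<n} A x0 i \<le> x0 i" unfolding mp_mv_def
      proof (rule SUP_least)
        fix k assume k: "k \<in> {..<n}"
        show "A i k + x0 k \<le> x0 i"
        proof (cases "A i k = -\<infinity>")
          case True then show ?thesis using x0f[of k] k by simp
        next
          case False
          then obtain a where a: "A i k = ereal a" using Afin[OF i, of k] k by (cases "A i k") auto
          obtain j where j: "j\<in>J" "ur k = Xr k j - sr j" using ufact[of k] k by auto
          have jn: "j<n" using JK[OF j(1)] by simp
          have "A i k + X k j \<le> X i j" using AX_le i k jn by blast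
          then have "a + Xr k j \<le> Xr i j" using a Xf[OF i jn] Xf[of k j] k jn by simp
          moreover have "Xr i j - sr j \<le> ur i" using ufact[OF i] j by blast
          ultimately show ?thesis using a x0f[OF i] x0f[of k] k j by simp
        qed
      qed
      show "x0 i \<le> mp_mv {..<n} A x0 i" unfolding mp_mv_def
      proof -
        obtain j where j: "j\<in>J" "ur i = Xr i j - sr j" using ufact[OF i] by auto
        have jn: "j<n" "X j j = 0" using JK[OF j(1)] by simp_all
        obtain k where k: "k<n" "X i j \<le> A i k + X k j" using X_le_AX[OF i jn] by blast
        have "A i k \<noteq> -\<infinity>" using k Xf[OF i jn(1)] Xf[OF k(1) jn(1)] by auto
        then obtain a where a: "A i k = ereal a" using Afin[OF i k(1)] by (cases "A i k") auto
        have "Xr i j \<le> a + Xr k j" using k a Xf[OF i jn(1)] Xf[OF k(1) jn(1)] by simp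
        moreover have "Xr k j - sr j \<le> ur k" using ufact[OF k(1)] j by blast
        ultimately have "x0 i \<le> A i k + x0 k" using a x0f[OF i] x0f[OF k(1)] j by simp
        also have "\<dots> \<le> (SUP k\<in>{..<n}. A i k + x0 k)" using k by (intro SUP_upper) auto
        finally show "x0 i \<le> (SUP k\<in>{..<n}. A i k + x0 k)" .
      qed
    qed
    then show ?thesis unfolding S0_def using x0f by auto
  qed
  have G2: "\<phi> x0 = \<Delta>"
  proof -
    have e1: "mp_dot {..<n} (mp_pinv x0) p = ereal (dr/2)" unfolding mp_dot_def
    proof (rule antisym)
      show "(SUP k\<in>{..<n}. mp_pinv x0 k + p k) \<le> ereal (dr/2)"
      proof (rule SUP_least)
        fix k assume k: "k \<in> {..<n}"
        then show "mp_pinv x0 k + p k \<le> ereal (dr/2)"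
          using x0f[of k] pf[of k] dfact(3) by (auto simp: mp_pinv_def)
      qed
      obtain k where k: "k<n" "dr = pr k - ur k" using dfact(2) by blast
      have "ereal (dr/2) = mp_pinv x0 k + p k" using k x0f[of k] pf[of k] by (simp add: mp_pinv_def field_simps)
      also have "\<dots> \<le> (SUP k\<in>{..<n}. mp_pinv x0 k + p k)" using k by (intro SUP_upper) auto
      finally show "ereal (dr/2) \<le> (SUP k\<in>{..<n}. mp_pinv x0 k + p k)" .
    qed
    have e2: "mp_dot {..<n} qm x0 = ereal (dr/2)" unfolding mp_dot_def
    proof (rule antisym)
      show "(SUP k\<in>{..<n}. qm k + x0 k) \<le> ereal (dr/2)"
      proof (rule SUP_least)
        fix k assume k: "k \<in> {..<n}"
        obtain j where j: "j\<in>J" "ur k = Xr k j - sr j" using ufact[of k] k by auto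
        have "qr k + Xr k j \<le> sr j" using sfact[OF j(1)] k by auto
        then show "qm k + x0 k \<le> ereal (dr/2)" using x0f[of k] qf[of k] k j by simp
      qed
      obtain j0 where j0: "j0 \<in> J" using Jne by blast
      obtain k where k: "k<n" "sr j0 = qr k + Xr k j0" using sfact[OF j0] by blast
      have "Xr k j0 - sr j0 \<le> ur k" using ufact[OF k(1)] j0 by blast
      then have "ereal (dr/2) \<le> qm k + x0 k" using k x0f[of k] qf[of k] by simp
      also have "\<dots> \<le> (SUP k\<in>{..<n}. qm k + x0 k)" using k by (intro SUP_upper) auto
      finally show "ereal (dr/2) \<le> (SUP k\<in>{..<n}. qm k + x0 k)" .
    qed
    show ?thesis unfolding phi_def e1 e2 Df by simp
  qed
  have G3: "\<Delta> \<le> \<phi> x" if xS: "x \<in> S0" for x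
  proof -
    have fx: "\<forall>j<n. x j \<noteq> \<infinity> \<and> x j \<noteq> -\<infinity>" and ex: "\<forall>i<n. mp_mv {..<n} A x i = x i"
      using xS unfolding S0_def by auto
    define xr where "xr k = real_of_ereal (x k)" for k
    have xf: "x k = ereal (xr k)" if "k<n" for k
      unfolding xr_def using fx that by (intro fin_real) auto
    obtain tr where tf: "mp_dot {..<n} qm x = ereal tr" "\<forall>k<n. qr k + xr k \<le> tr"
    proof -
      have "qm k + x k = ereal (qr k + xr k)" if "k \<in> {..<n}" for k using that qf xf by simp
      then obtain k where "k<n" "mp_dot {..<n} qm x = ereal (qr k + xr k)" "\<forall>k'<n. qr k' + xr k' \<le> qr k + xr k"
        using supr[of "{..<n}" "\<lambda>k. qm k + x k" "\<lambda>k. qr k + xr k"] unfolding mp_dot_def by auto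
      then show ?thesis using that by blast
    qed
    have key: "xr i \<le> tr + ur i" if i: "i<n" for i
    proof -
      obtain j where j: "j<n" "X j j = 0" "x i \<le> X i j + x j" using chain[OF fx ex i] by blast
      have xij: "xr i \<le> Xr i j + xr j" using j Xf[OF i j(1)] xf[OF i] xf[OF j(1)] by simp
      have "mp_dependent n (\<lambda>i. C i j) C J" using Aplus j(1) unfolding mp_Aplus_cols_def C_def by blast
      then obtain c where c: "\<forall>k\<in>J. c k \<noteq> \<infinity>" "\<forall>i'<n. C i' j = (SUP k\<in>J. c k + C i' k)"
        unfolding mp_dependent_def by blast
      obtain k0 where k0: "k0 \<in> J" "(SUP k\<in>J. c k + C i k) = c k0 + C i k0"
        using sup_attain[OF finJ Jne, of "\<lambda>k. c k + C i k"] by blast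
      have k0n: "k0 < n" "X k0 k0 = 0" using JK[OF k0(1)] by simp_all
      have Cij: "C i' j = X i' j" if "i'<n" for i' using Cdef[OF that] j by simp
      have Cik0: "C i' k0 = X i' k0" if "i'<n" for i' using Cdef[OF that] k0n by simp
      have eqi: "X i j = c k0 + X i k0" using c(2) i k0 Cij[OF i] Cik0[OF i] by simp
      have "c k0 \<noteq> -\<infinity>" using eqi Xf[OF i j(1)] Xf[OF i k0n(1)] by auto
      then obtain ck where ck: "c k0 = ereal ck" using c(1) k0(1) by (cases "c k0") auto
      have eqr: "Xr i j = ck + Xr i k0" using eqi ck Xf[OF i j(1)] Xf[OF i k0n(1)] by simp
      obtain k'' where k'': "k''<n" "sr k0 = qr k'' + Xr k'' k0" using sfact[OF k0(1)] by blast
      have "c k0 + C k'' k0 \<le> C k'' j"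
        using c(2) k''(1) k0(1) by (auto intro: SUP_upper)
      then have b1: "ck + Xr k'' k0 \<le> Xr k'' j"
        using ck Cij[OF k''(1)] Cik0[OF k''(1)] Xf[OF k''(1) j(1)] Xf[OF k''(1) k0n(1)] by simp
      have "X k'' j + x j \<le> x k''" using eig_X[OF fx ex k''(1) j(1)] .
      then have b2: "Xr k'' j + xr j \<le> xr k''" using Xf[OF k''(1) j(1)] xf[OF k''(1)] xf[OF j(1)] by simp
      have b3: "qr k'' + xr k'' \<le> tr" using tf(2) k''(1) by blast
      have b4: "Xr i k0 - sr k0 \<le> ur i" using ufact[OF i] k0(1) by blast
      show ?thesis using xij eqr b1 b2 b3 b4 k''(2) by linarith
    qed
    obtain k1 where k1: "k1<n" "dr = pr k1 - ur k1" using dfact(2) by blast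
    have "ereal (pr k1 - xr k1) = mp_pinv x k1 + p k1" using xf[OF k1(1)] pf[of k1] by (simp add: mp_pinv_def)
    also have "\<dots> \<le> mp_dot {..<n} (mp_pinv x) p" unfolding mp_dot_def using k1 by (intro SUP_upper) auto
    finally have h1: "ereal (pr k1 - xr k1) \<le> mp_dot {..<n} (mp_pinv x) p" .
    have "dr - tr \<le> pr k1 - xr k1" using key[OF k1(1)] k1(2) by linarith
    then have h2: "ereal (dr - tr) \<le> \<phi> x" using h1 unfolding phi_def by (metis ereal_less_eq(3) max.coboundedI1 order_trans)
    have h3: "ereal tr \<le> \<phi> x" unfolding phi_def tf(1) by simp
    have "dr/2 \<le> max tr (dr - tr)" by linarith
    then have "ereal (dr/2) \<le> max (ereal tr) (ereal (dr - tr))" by (simp add: max_def split: if_splits)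
    also have "\<dots> \<le> \<phi> x" using h2 h3 by simp
    finally show ?thesis using Df by simp
  qed
  show ?thesis using G1 G2 G3 by blast
qed


end
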